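(* In the Neutralization-Based Reclamation (NBR) scheme described in the context, the number of nodes that are retired but not yet reclaimed is bounded (in every execution, including executions in which threads are delayed or crash).
   Context: Setting: an asynchronous shared-memory system with a fixed number $p$ of threads operating on a linked concurrent data structure; each unlinked node is retired by exactly one thread. NBR works as follows. Each thread has a private limbo bag of retired nodes, a thread-local flag restartable, and a row of a shared array reservations; each data structure operation reserves at most $k$ nodes, where $k$ is strictly smaller than the limbo bag size threshold $h$. Operations consist of read phases (start from an entry point, read only; restartable set to true at the start after clearing reservations) and write phases (entered after writing reservations of all nodes to be accessed in the write phase and setting restartable to false; only reserved nodes are accessed). On a neutralizing signal a thread with restartable true discards its private references and restarts its read phase from a checkpoint; a thread with restartable false ignores the signal. A thread appends each node it retires to its limbo bag; whenever the limbo bag exceeds the threshold $h$, the thread signals all other threads, scans all reservations, and frees every node in its limbo bag that is not reserved. Signals are assumed to be handled by the recipient before it takes any further step once the sender finishes sending. *)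

theory Defs
  imports Main
begin

text \<open>Abstract model of Neutralization-Based Reclamation (NBR) with p threads
  (numbered 0..p-1), at most k reservations per operation and limbo-bag
  threshold h.  Executions are arbitrary interleavings of
  atomic thread steps; a delayed or crashed thread simply takes no (further)
  steps, so every such execution is covered by reachability.\<close>

record 'a nbr_state =
  bag         :: "nat \<Rightarrow> 'a set"         \<comment> \<open>private limbo bag of each thread\<close>
  res         :: "nat \<Rightarrow> 'a set"         \<comment> \<open>row of the shared reservations array\<close>
  restartable :: "nat \<Rightarrow> bool"
  phase       :: "nat \<Rightarrow> nat option"     \<comment> \<open>None: normal; Some j: reclaiming, next row to scan is j\<close>
  scanned     :: "nat \<Rightarrow> 'a set"
  retired     :: "'a set"                 \<comment> \<open>all nodes ever retired\<close>

definition nbr_init :: "'a nbr_state" where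
  "nbr_init = \<lparr> bag = (\<lambda>_. {}), res = (\<lambda>_. {}), restartable = (\<lambda>_. True),
                phase = (\<lambda>_. None), scanned = (\<lambda>_. {}), retired = {} \<rparr>"

inductive nbr_step :: "nat \<Rightarrow> nat \<Rightarrow> nat \<Rightarrow> 'a nbr_state \<Rightarrow> 'a nbr_state \<Rightarrow> bool"
  for p k h :: nat where
  start_read: "\<lbrakk> t < p; phase s t = None \<rbrakk> \<Longrightarrow>
     nbr_step p k h s (s\<lparr> res := (res s)(t := {}), restartable := (restartable s)(t := True) \<rparr>)"
| reserve: "\<lbrakk> t < p; phase s t = None; restartable s t; finite R; card (res s t \<union> R) \<le> k \<rbrakk> \<Longrightarrow>
     nbr_step p k h s (s\<lparr> res := (res s)(t := res s t \<union> R) \<rparr>)"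
  \<comment> \<open>enter the write phase\<close>
| enter_write: "\<lbrakk> t < p; phase s t = None; restartable s t \<rbrakk> \<Longrightarrow>
     nbr_step p k h s (s\<lparr> restartable := (restartable s)(t := False) \<rparr>)"
| retire: "\<lbrakk> t < p; phase s t = None; \<not> restartable s t; x \<notin> retired s;
             card (insert x (bag s t)) \<le> h \<rbrakk> \<Longrightarrow>
     nbr_step p k h s (s\<lparr> bag := (bag s)(t := insert x (bag s t)), retired := insert x (retired s) \<rparr>)"
  \<comment> \<open>retire a node, the bag exceeds h: neutralizing signal to all other threads
      (handled immediately: restartable threads restart their read phase, clearing
      their reservations; non-restartable threads ignore it), then start scanning\<close>
| retire_reclaim: "\<lbrakk> t < p; phase s t = None; \<not> restartable s t; x \<notin> retired s;
             card (insert x (bag s t)) > h \<rbrakk> \<Longrightarrow>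
     nbr_step p k h s (s\<lparr> bag := (bag s)(t := insert x (bag s t)), retired := insert x (retired s),
        res := (\<lambda>j. if j < p \<and> j \<noteq> t \<and> restartable s j then {} else res s j),
        phase := (phase s)(t := Some 0), scanned := (scanned s)(t := {}) \<rparr>)"
| scan: "\<lbrakk> t < p; phase s t = Some j; j < p \<rbrakk> \<Longrightarrow>
     nbr_step p k h s (s\<lparr> scanned := (scanned s)(t := scanned s t \<union> res s j),
                         phase := (phase s)(t := Some (Suc j)) \<rparr>)"
| free: "\<lbrakk> t < p; phase s t = Some p \<rbrakk> \<Longrightarrow>
     nbr_step p k h s (s\<lparr> bag := (bag s)(t := {x \<in> bag s t. x \<in> scanned s t}),
                         phase := (phase s)(t := None) \<rparr>)"

definition unreclaimed :: "nat \<Rightarrow> 'a nbr_state \<Rightarrow> 'a set" where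
  "unreclaimed p s = (\<Union>t<p. bag s t)"

end

theory Submission
  imports Defs
begin

definition inv_nbr :: "nat \<Rightarrow> nat \<Rightarrow> nat \<Rightarrow> 'a nbr_state \<Rightarrow> bool" where
  "inv_nbr p k h s \<longleftrightarrow>
     (\<forall>t. finite (res s t) \<and> card (res s t) \<le> k) \<and>
     (\<forall>t. finite (bag s t) \<and> card (bag s t) \<le> h + p*k + 1) \<and>
     (\<forall>t. phase s t = None \<longrightarrow> card (bag s t) \<le> h + p*k) \<and>
     (\<forall>t j. phase s t = Some j \<longrightarrow> j \<le> p \<and> finite (scanned s t) \<and> card (scanned s t) \<le> j*k)"

lemma inv_init: "inv_nbr p k h nbr_init"
  by (simp add: inv_nbr_def nbr_init_def)

lemma inv_step:
  assumes "nbr_step p k h s s'" "inv_nbr p k h s"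
  shows "inv_nbr p k h s'"
  using assms
proof induction
  case (start_read t s)
  then show ?case by (auto simp: inv_nbr_def)
next
  case (reserve t s R)
  then show ?case by (auto simp: inv_nbr_def)
next
  case (enter_write t s)
  then show ?case by (auto simp: inv_nbr_def)
next
  case (retire t s x)
  then show ?case by (auto simp: inv_nbr_def)
next
  case (retire_reclaim t s x)
  from retire_reclaim have fbt: "finite (bag s t)" and cbt: "card (bag s t) \<le> h + p*k"
    by (auto simp: inv_nbr_def)
  have "card (insert x (bag s t)) \<le> card (bag s t) + 1"
    using fbt by (simp add: card_insert_if)
  with cbt have c: "card (insert x (bag s t)) \<le> h + p*k + 1" by linarith
  from retire_reclaim(6) have
    r: "\<forall>t. finite (res s t) \<and> card (res s t) \<le> k"
    and b: "\<forall>t. finite (bag s t) \<and> card (bag s t) \<le> h + p*k + 1"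
    and n: "\<forall>t. phase s t = None \<longrightarrow> card (bag s t) \<le> h + p*k"
    and sc: "\<forall>t j. phase s t = Some j \<longrightarrow> j \<le> p \<and> finite (scanned s t) \<and> card (scanned s t) \<le> j*k"
    unfolding inv_nbr_def by blast+
  show ?case unfolding inv_nbr_def
    using r b n sc c fbt by auto
next
  case (scan t s j)
  from scan(4) have
    r: "\<forall>t. finite (res s t) \<and> card (res s t) \<le> k"
    and b: "\<forall>t. finite (bag s t) \<and> card (bag s t) \<le> h + p*k + 1"
    and n: "\<forall>t. phase s t = None \<longrightarrow> card (bag s t) \<le> h + p*k"
    and sc: "\<forall>t j. phase s t = Some j \<longrightarrow> j \<le> p \<and> finite (scanned s t) \<and> card (scanned s t) \<le> j*k"
    unfolding inv_nbr_def by blast+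
  have "card (scanned s t \<union> res s j) \<le> card (scanned s t) + card (res s j)"
    by (rule card_Un_le)
  moreover have "card (scanned s t) \<le> j*k" using sc scan(2) by blast
  moreover have "card (res s j) \<le> k" using r by blast
  ultimately have c: "card (scanned s t \<union> res s j) \<le> Suc j * k" by simp
  have f: "finite (scanned s t \<union> res s j)" using sc r scan(2) by blast
  show ?case unfolding inv_nbr_def
    using r b n sc c f scan(2,3) by auto
next
  case (free t s)
  have sub: "{x \<in> bag s t. x \<in> scanned s t} \<subseteq> scanned s t" by blast
  from free have f: "finite (scanned s t)" "card (scanned s t) \<le> p*k"
    by (auto simp: inv_nbr_def)
  hence "card {x \<in> bag s t. x \<in> scanned s t} \<le> p*k"
    using card_mono[OF f(1) sub] by linarith
  with free f show ?case
    by (auto simp: inv_nbr_def)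
qed

lemma inv_reach:
  assumes "(nbr_step p k h)\<^sup>*\<^sup>* nbr_init s"
  shows "inv_nbr p k h s"
  using assms
  by induction (auto intro: inv_init inv_step)

theorem lemma7:
  fixes p k h :: nat
  assumes "k < h"
  shows "\<exists>B::nat. \<forall>s :: 'a nbr_state. (nbr_step p k h)\<^sup>*\<^sup>* nbr_init s \<longrightarrow>
           finite (unreclaimed p s) \<and> card (unreclaimed p s) \<le> B"
proof (intro exI allI impI)
  fix s :: "'a nbr_state"
  assume "(nbr_step p k h)\<^sup>*\<^sup>* nbr_init s"
  hence I: "inv_nbr p k h s" by (rule inv_reach)
  hence fb: "\<And>t. finite (bag s t)" and cb: "\<And>t. card (bag s t) \<le> h + p*k + 1"
    by (auto simp: inv_nbr_def)
  show "finite (unreclaimed p s) \<and> card (unreclaimed p s) \<le> p * (h + p*k + 1)"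
  proof
    show "finite (unreclaimed p s)" using fb by (simp add: unreclaimed_def)
    have "card (unreclaimed p s) \<le> (\<Sum>t<p. card (bag s t))"
      unfolding unreclaimed_def by (rule card_UN_le) simp
    also have "\<dots> \<le> (\<Sum>t<p. h + p*k + 1)" by (rule sum_mono) (rule cb)
    also have "\<dots> = p * (h + p*k + 1)" by simp
    finally show "card (unreclaimed p s) \<le> p * (h + p*k + 1)" .
  qed
qed

end
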